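(* Let $G$ be a finitely generated discrete group and $q:\mathcal O_{\exp}(G)\to\mathbb R_+$ a continuous submultiplicative seminorm ($q(uv)\le q(u)q(v)$ for pointwise multiplication). Then (a) the support $\operatorname{supp}(q)=\{x\in G: q(1_x)\ne0\}$ is finite, and (b) $q(1_x)\ge1$ for every $x\in\operatorname{supp}(q)$.
   Context: A semicharacter is a function $f:G\to[1,\infty)$ with $f(xy)\le f(x)f(y)$. $\mathcal O_{\exp}(G)$ is the set of functions $u:G\to\mathbb C$ with $|u|\le f$ for some semicharacter $f$, with the locally convex inductive limit topology of the spaces $\mathbb Cf^{\blacksquare}=\bigcup_\lambda\lambda f^{\blacksquare}$, $f^{\blacksquare}=\{u:|u|\le f\}$, each with the topology in which a set is closed iff it meets every $\lambda f^{\blacksquare}$ in a set closed for pointwise convergence. $1_x$ is the characteristic function of $\{x\}$. *)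

theory Defs
  imports "HOL-Analysis.Analysis" "HOL-Algebra.Algebra"
begin

text \<open>Functions G -> C are modelled as functions 'a => complex vanishing outside carrier G.\<close>

definition semicharacter :: "('a, 'b) monoid_scheme \<Rightarrow> ('a \<Rightarrow> real) \<Rightarrow> bool" where
  "semicharacter G f \<longleftrightarrow> (\<forall>x\<in>carrier G. 1 \<le> f x) \<and>
     (\<forall>x\<in>carrier G. \<forall>y\<in>carrier G. f (x \<otimes>\<^bsub>G\<^esub> y) \<le> f x * f y)"

definition fun_on :: "('a, 'b) monoid_scheme \<Rightarrow> ('a \<Rightarrow> complex) set" where
  "fun_on G = {u. \<forall>x. x \<notin> carrier G \<longrightarrow> u x = 0}"

definition Oexp :: "('a, 'b) monoid_scheme \<Rightarrow> ('a \<Rightarrow> complex) set" where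
  "Oexp G = {u \<in> fun_on G. \<exists>f. semicharacter G f \<and> (\<forall>x\<in>carrier G. cmod (u x) \<le> f x)}"

text \<open>lam f^box = {lam u : |u| <= f}, for a scalar lam >= 0 (for complex lam this is |lam| f^box).\<close>
definition box_set :: "('a, 'b) monoid_scheme \<Rightarrow> ('a \<Rightarrow> real) \<Rightarrow> real \<Rightarrow> ('a \<Rightarrow> complex) set" where
  "box_set G f lam = {u \<in> fun_on G. \<forall>x\<in>carrier G. cmod (u x) \<le> lam * f x}"

definition span_box :: "('a, 'b) monoid_scheme \<Rightarrow> ('a \<Rightarrow> real) \<Rightarrow> ('a \<Rightarrow> complex) set" where
  "span_box G f = (\<Union>lam\<in>{0..}. box_set G f lam)"

definition pointwise_top :: "('a \<Rightarrow> complex) topology" where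
  "pointwise_top = product_topology (\<lambda>_. euclidean) UNIV"

text \<open>Open sets of C f^box: a set is closed iff it meets every lam f^box in a pointwise closed set.\<close>
definition step_open :: "('a, 'b) monoid_scheme \<Rightarrow> ('a \<Rightarrow> real) \<Rightarrow> ('a \<Rightarrow> complex) set \<Rightarrow> bool" where
  "step_open G f U \<longleftrightarrow> U \<subseteq> span_box G f \<and>
     (\<forall>lam\<ge>0. closedin pointwise_top ((span_box G f - U) \<inter> box_set G f lam))"

definition conv_set :: "('a \<Rightarrow> complex) set \<Rightarrow> bool" where
  "conv_set V \<longleftrightarrow> (\<forall>u\<in>V. \<forall>v\<in>V. \<forall>t::real. 0 \<le> t \<and> t \<le> 1 \<longrightarrow>
      (\<lambda>x. of_real t * u x + of_real (1 - t) * v x) \<in> V)"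

definition lc_vector_topology :: "('a \<Rightarrow> complex) topology \<Rightarrow> bool" where
  "lc_vector_topology T \<longleftrightarrow>
     continuous_map (prod_topology T T) T (\<lambda>(u, v). (\<lambda>x. u x + v x)) \<and>
     continuous_map (prod_topology (euclidean :: complex topology) T) T (\<lambda>(c, u). (\<lambda>x. c * u x)) \<and>
     (\<forall>U u. openin T U \<and> u \<in> U \<longrightarrow> (\<exists>V. openin T V \<and> u \<in> V \<and> V \<subseteq> U \<and> conv_set V))"

text \<open>Locally convex topologies on O_exp(G) for which all inclusions C f^box -> O_exp(G) are continuous.\<close>
definition admissible_top :: "('a, 'b) monoid_scheme \<Rightarrow> ('a \<Rightarrow> complex) topology \<Rightarrow> bool" where
  "admissible_top G T \<longleftrightarrow> topspace T = Oexp G \<and> lc_vector_topology T \<and>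
     (\<forall>f. semicharacter G f \<longrightarrow> (\<forall>V. openin T V \<longrightarrow> step_open G f (V \<inter> span_box G f)))"

text \<open>The locally convex inductive limit topology: the finest such topology (supremum).\<close>
definition Oexp_top :: "('a, 'b) monoid_scheme \<Rightarrow> ('a \<Rightarrow> complex) topology" where
  "Oexp_top G = topology_generated_by (\<Union>{{U. openin T U} | T. admissible_top G T})"

definition seminorm_on :: "('a \<Rightarrow> complex) set \<Rightarrow> (('a \<Rightarrow> complex) \<Rightarrow> real) \<Rightarrow> bool" where
  "seminorm_on S q \<longleftrightarrow> (\<forall>u\<in>S. 0 \<le> q u) \<and>
     (\<forall>u\<in>S. \<forall>v\<in>S. q (\<lambda>x. u x + v x) \<le> q u + q v) \<and>
     (\<forall>c. \<forall>u\<in>S. q (\<lambda>x. c * u x) = cmod c * q u)"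

definition finitely_generated :: "('a, 'b) monoid_scheme \<Rightarrow> bool" where
  "finitely_generated G \<longleftrightarrow> (\<exists>S. finite S \<and> S \<subseteq> carrier G \<and> generate G S = carrier G)"

definition point_ind :: "'a \<Rightarrow> 'a \<Rightarrow> complex" where
  "point_ind x = (\<lambda>y. if y = x then 1 else 0)"

end

theory Submission
  imports Defs
begin

lemma semichar_const1: "semicharacter G (\<lambda>_. 1)"
  by (simp add: semicharacter_def)

lemma semichar_add:
  assumes "semicharacter G f" "semicharacter G g"
  shows "semicharacter G (\<lambda>x. f x + g x)"
  unfolding semicharacter_def
proof safe
  fix x assume "x \<in> carrier G" then show "1 \<le> f x + g x" using assms unfolding semicharacter_def by force
next
  fix x y assume xy: "x \<in> carrier G" "y \<in> carrier G"
  have f: "f (x \<otimes>\<^bsub>G\<^esub> y) \<le> f x * f y" "1 \<le> f x" "1 \<le> f y" using assms xy unfolding semicharacter_def by auto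
  have g: "g (x \<otimes>\<^bsub>G\<^esub> y) \<le> g x * g y" "1 \<le> g x" "1 \<le> g y" using assms xy unfolding semicharacter_def by auto
  have "f x * f y + g x * g y \<le> (f x + g x) * (f y + g y)"
    using f g by (simp add: algebra_simps)
  then show "f (x \<otimes>\<^bsub>G\<^esub> y) + g (x \<otimes>\<^bsub>G\<^esub> y) \<le> (f x + g x) * (f y + g y)" using f g by linarith
qed

lemma semichar_scale:
  assumes "semicharacter G f" "c \<ge> 1"
  shows "semicharacter G (\<lambda>x. c * f x)"
  unfolding semicharacter_def
proof safe
  fix x assume "x \<in> carrier G" then have "1 \<le> f x" using assms unfolding semicharacter_def by force
  then show "1 \<le> c * f x" using assms(2) by (metis mult_mono' mult_1 order_trans zero_le_one)
next
  fix x y assume xy: "x \<in> carrier G" "y \<in> carrier G"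
  have f: "f (x \<otimes>\<^bsub>G\<^esub> y) \<le> f x * f y" "1 \<le> f x" "1 \<le> f y" using assms xy unfolding semicharacter_def by auto
  have "c * f (x \<otimes>\<^bsub>G\<^esub> y) \<le> c * (f x * f y)" using f assms by simp
  also have "\<dots> \<le> c * (c * (f x * f y))" using f assms
    by (simp add: mult_le_cancel_left1 )
  finally show "c * f (x \<otimes>\<^bsub>G\<^esub> y) \<le> c * f x * (c * f y)" by (simp add: algebra_simps)
qed

lemma Oexp_add: "u \<in> Oexp G \<Longrightarrow> v \<in> Oexp G \<Longrightarrow> (\<lambda>x. u x + v x) \<in> Oexp G"
  unfolding Oexp_def fun_on_def
proof safe
  fix f g assume a: "\<forall>x. x \<notin> carrier G \<longrightarrow> u x = 0" "semicharacter G f" "\<forall>x\<in>carrier G. cmod (u x) \<le> f x"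
    "\<forall>x. x \<notin> carrier G \<longrightarrow> v x = 0" "semicharacter G g" "\<forall>x\<in>carrier G. cmod (v x) \<le> g x"
  show "\<exists>h. semicharacter G h \<and> (\<forall>x\<in>carrier G. cmod (u x + v x) \<le> h x)"
  proof (intro exI conjI ballI)
    show "semicharacter G (\<lambda>x. f x + g x)" using a semichar_add by blast
    fix x assume "x \<in> carrier G"
    then show "cmod (u x + v x) \<le> f x + g x" using a norm_triangle_ineq[of "u x" "v x"] by force
  qed
qed auto

lemma Oexp_scale: "u \<in> Oexp G \<Longrightarrow> (\<lambda>x. c * u x) \<in> Oexp G"
  unfolding Oexp_def fun_on_def
proof safe
  fix f assume a: "\<forall>x. x \<notin> carrier G \<longrightarrow> u x = 0" "semicharacter G f" "\<forall>x\<in>carrier G. cmod (u x) \<le> f x"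
  show "\<exists>h. semicharacter G h \<and> (\<forall>x\<in>carrier G. cmod (c * u x) \<le> h x)"
  proof (intro exI conjI ballI)
    show "semicharacter G (\<lambda>x. max 1 (cmod c) * f x)" by (rule semichar_scale[OF a(2)]) simp
    fix x assume x: "x \<in> carrier G"
    have "cmod (c * u x) = cmod c * cmod (u x)" by (simp add: norm_mult)
    also have "\<dots> \<le> max 1 (cmod c) * f x" using a x by (intro mult_mono) auto
    finally show "cmod (c * u x) \<le> max 1 (cmod c) * f x" .
  qed
qed auto

lemma Oexp_conv: "u \<in> Oexp G \<Longrightarrow> v \<in> Oexp G \<Longrightarrow>
   (\<lambda>x. of_real t * u x + of_real (1 - t) * v x) \<in> Oexp G"
  using Oexp_add[of "\<lambda>x. of_real t * u x" G "\<lambda>x. of_real (1 - t) * v x"] Oexp_scale by blast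

lemma zero_Oexp: "(\<lambda>_. 0) \<in> Oexp G"
  unfolding Oexp_def fun_on_def using semichar_const1 by fastforce

lemma point_ind_Oexp: "x \<in> carrier G \<Longrightarrow> point_ind x \<in> Oexp G"
  unfolding Oexp_def fun_on_def point_ind_def using semichar_const1 by fastforce

lemma box_sub_span: "lam \<ge> 0 \<Longrightarrow> box_set G f lam \<subseteq> span_box G f"
  unfolding span_box_def by auto

lemma span_sub_Oexp:
  assumes f: "semicharacter G f" shows "span_box G f \<subseteq> Oexp G"
proof
  fix u assume "u \<in> span_box G f"
  then obtain lam where l: "lam \<ge> 0" "u \<in> fun_on G" "\<forall>x\<in>carrier G. cmod (u x) \<le> lam * f x"
    unfolding span_box_def box_set_def by auto
  have "semicharacter G (\<lambda>x. max 1 lam * f x)" by (rule semichar_scale[OF f]) simp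
  moreover have "\<forall>x\<in>carrier G. cmod (u x) \<le> max 1 lam * f x"
  proof
    fix x assume x: "x \<in> carrier G"
    have "0 \<le> f x" using f x unfolding semicharacter_def by force
    then have "lam * f x \<le> max 1 lam * f x" by (intro mult_right_mono) auto
    then show "cmod (u x) \<le> max 1 lam * f x" using l x by force
  qed
  ultimately show "u \<in> Oexp G" using l unfolding Oexp_def by blast
qed

lemma box_closed: "closedin pointwise_top (box_set G f lam)"
proof -
  define S where "S = (\<lambda>x. if x \<in> carrier G then cball (0::complex) (lam * f x) else {0})"
  have "box_set G f lam = PiE UNIV S"
    unfolding box_set_def fun_on_def S_def
    apply (auto simp: PiE_iff)
     apply (metis empty_iff insert_iff)
    by (metis mem_cball_0)
  moreover have "closedin (product_topology (\<lambda>_. euclidean) UNIV) (PiE UNIV S)"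
    unfolding closedin_product_topology S_def by auto
  ultimately show ?thesis unfolding pointwise_top_def by simp
qed

lemma empty_step_open: "step_open G f {}"
  unfolding step_open_def using box_closed box_sub_span
  by (metis Diff_empty empty_subsetI inf.absorb_iff2)

definition indisc :: "('a, 'b) monoid_scheme \<Rightarrow> ('a \<Rightarrow> complex) topology" where
  "indisc G = topology (\<lambda>U. U = {} \<or> U = Oexp G)"

lemma openin_indisc: "openin (indisc G) U \<longleftrightarrow> U = {} \<or> U = Oexp G"
proof -
  have "istopology (\<lambda>U. U = {} \<or> U = Oexp G)"
    unfolding istopology_def
  proof (intro conjI allI impI)
    fix K :: "('a \<Rightarrow> complex) set set" assume "\<forall>K'\<in>K. K' = {} \<or> K' = Oexp G"
    then show "\<Union>K = {} \<or> \<Union>K = Oexp G" by blast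
  qed auto
  then show ?thesis unfolding indisc_def by (simp add: topology_inverse')
qed

lemma topspace_indisc: "topspace (indisc G) = Oexp G"
  unfolding topspace_def openin_indisc by auto

lemma cont_indisc:
  assumes "\<And>z. z \<in> topspace Xt \<Longrightarrow> h z \<in> Oexp G"
  shows "continuous_map Xt (indisc G) h"
  unfolding continuous_map_def topspace_indisc openin_indisc
proof (intro conjI allI impI)
  show "h \<in> topspace Xt \<rightarrow> Oexp G" using assms by blast
  fix U assume "U = {} \<or> U = Oexp G"
  then show "openin Xt {z \<in> topspace Xt. h z \<in> U}"
  proof
    assume "U = Oexp G"
    then have "{z \<in> topspace Xt. h z \<in> U} = topspace Xt" using assms by blast
    then show ?thesis by simp
  qed simp
qed

lemma admissible_indisc: "admissible_top G (indisc G)"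
  unfolding admissible_top_def
proof (intro conjI allI impI)
  show "topspace (indisc G) = Oexp G" by (rule topspace_indisc)
  show "lc_vector_topology (indisc G)"
    unfolding lc_vector_topology_def
  proof (intro conjI)
    show "continuous_map (prod_topology (indisc G) (indisc G)) (indisc G) (\<lambda>(u, v) x. u x + v x)"
    proof (rule cont_indisc)
      fix z assume "z \<in> topspace (prod_topology (indisc G) (indisc G))"
      then obtain u v where "z = (u,v)" "u \<in> Oexp G" "v \<in> Oexp G"
        by (cases z) (simp add: topspace_indisc)
      then show "(case z of (u, v) \<Rightarrow> \<lambda>x. u x + v x) \<in> Oexp G" by (simp add: Oexp_add)
    qed
    show "continuous_map (prod_topology (euclidean::complex topology) (indisc G)) (indisc G) (\<lambda>(c, u) x. c * u x)"
    proof (rule cont_indisc)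
      fix z assume "z \<in> topspace (prod_topology (euclidean::complex topology) (indisc G))"
      then obtain c u where "z = (c,u)" "u \<in> Oexp G"
        by (cases z) (simp add: topspace_indisc)
      then show "(case z of (c, u) \<Rightarrow> \<lambda>x. c * u x) \<in> Oexp G" by (simp add: Oexp_scale)
    qed
    show "\<forall>U u. openin (indisc G) U \<and> u \<in> U \<longrightarrow> (\<exists>V. openin (indisc G) V \<and> u \<in> V \<and> V \<subseteq> U \<and> conv_set V)"
    proof (intro allI impI)
      fix U u assume a: "openin (indisc G) U \<and> u \<in> U"
      then have "U = Oexp G" by (auto simp: openin_indisc)
      moreover have "conv_set (Oexp G)" unfolding conv_set_def using Oexp_conv by blast
      ultimately show "\<exists>V. openin (indisc G) V \<and> u \<in> V \<and> V \<subseteq> U \<and> conv_set V"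
        using a by blast
    qed
  qed
  fix f V assume f: "semicharacter G f" and V: "openin (indisc G) V"
  then have "V = {} \<or> V = Oexp G" by (simp add: openin_indisc)
  then show "step_open G f (V \<inter> span_box G f)"
  proof
    assume "V = Oexp G"
    then have "V \<inter> span_box G f = span_box G f" using span_sub_Oexp[OF f] by auto
    then show ?thesis unfolding step_open_def by simp
  qed (simp add: empty_step_open)
qed

lemma topspace_Oexp_top: "Oexp G \<subseteq> topspace (Oexp_top G)"
  unfolding Oexp_top_def topology_generated_by_topspace
  using admissible_indisc[of G] openin_indisc[of G "Oexp G"] by blast

lemma gen_step_open:
  assumes "generate_topology_on (\<Union>{{U. openin T U} | T. admissible_top G T}) S"
    and f: "semicharacter G f"
  shows "step_open G f (S \<inter> span_box G f)"
  using assms(1)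
proof (induction rule: generate_topology_on.induct)
  case Empty
  then show ?case by (simp add: empty_step_open)
next
  case (Int a b)
  show ?case unfolding step_open_def
  proof (intro conjI allI impI)
    fix lam :: real assume l: "0 \<le> lam"
    have "(span_box G f - a \<inter> b \<inter> span_box G f) \<inter> box_set G f lam =
      ((span_box G f - a \<inter> span_box G f) \<inter> box_set G f lam) \<union> ((span_box G f - b \<inter> span_box G f) \<inter> box_set G f lam)"
      by blast
    then show "closedin pointwise_top ((span_box G f - a \<inter> b \<inter> span_box G f) \<inter> box_set G f lam)"
      using Int.IH l unfolding step_open_def by (metis closedin_Un)
  qed auto
next
  case (UN K)
  show ?case
  proof (cases "K = {}")
    case True then show ?thesis by (simp add: empty_step_open)
  next
    case False
    show ?thesis unfolding step_open_def
    proof (intro conjI allI impI)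
      fix lam :: real assume l: "0 \<le> lam"
      have "(span_box G f - \<Union>K \<inter> span_box G f) \<inter> box_set G f lam =
        \<Inter>((\<lambda>k. (span_box G f - k \<inter> span_box G f) \<inter> box_set G f lam) ` K)"
        using False by blast
      moreover have "\<forall>k\<in>K. closedin pointwise_top ((span_box G f - k \<inter> span_box G f) \<inter> box_set G f lam)"
        using UN.IH l unfolding step_open_def by blast
      ultimately show "closedin pointwise_top ((span_box G f - \<Union>K \<inter> span_box G f) \<inter> box_set G f lam)"
        using False by (metis (no_types, lifting) closedin_Inter image_is_empty imageE)
    qed auto
  qed
next
  case (Basis s)
  then show ?case using f unfolding admissible_top_def by blast
qed

lemma open_step_open:
  assumes "openin (Oexp_top G) S" "semicharacter G f"
  shows "step_open G f (S \<inter> span_box G f)"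
  using gen_step_open[of G S f] assms unfolding Oexp_top_def openin_topology_generated_by_iff by blast

theorem mainTheorem13:
  fixes G :: "('a, 'b) monoid_scheme" and q :: "('a \<Rightarrow> complex) \<Rightarrow> real"
  assumes "group G"
    and "finitely_generated G"
    and "seminorm_on (Oexp G) q"
    and "continuous_map (subtopology (Oexp_top G) (Oexp G)) euclideanreal q"
    and "\<forall>u\<in>Oexp G. \<forall>v\<in>Oexp G. q (\<lambda>x. u x * v x) \<le> q u * q v"
  shows "finite {x \<in> carrier G. q (point_ind x) \<noteq> 0}
    \<and> (\<forall>x \<in> carrier G. q (point_ind x) \<noteq> 0 \<longrightarrow> 1 \<le> q (point_ind x))"
proof -
  note sn = assms(3)[unfolded seminorm_on_def]
  have snn: "\<forall>u\<in>Oexp G. 0 \<le> q u" using conjunct1[OF sn] .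
  have shom: "\<forall>c. \<forall>u\<in>Oexp G. q (\<lambda>x. c * u x) = cmod c * q u" using conjunct2[OF conjunct2[OF sn]] .
  have pb: "1 \<le> q (point_ind x)" if x: "x \<in> carrier G" "q (point_ind x) \<noteq> 0" for x
  proof -
    have pi: "point_ind x \<in> Oexp G" using point_ind_Oexp[OF x(1)] .
    have sq: "(\<lambda>y. point_ind x y * point_ind x y) = point_ind x"
      unfolding point_ind_def by (rule ext) simp
    have H: "q (\<lambda>y. point_ind x y * point_ind x y) \<le> q (point_ind x) * q (point_ind x)"
      using bspec[OF bspec[OF assms(5) pi] pi] .
    have le: "q (point_ind x) * 1 \<le> q (point_ind x) * q (point_ind x)"
      using H unfolding sq mult_1_right .
    have nn: "0 \<le> q (point_ind x)" using bspec[OF snn pi] .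
    have pos: "0 < q (point_ind x)" using nn x(2) by linarith
    show ?thesis using mult_le_cancel_left_pos[OF pos, THEN iffD1, OF le] .
  qed
  have q0: "q (\<lambda>_. 0) = 0"
  proof -
    have "q (\<lambda>x. 0 * (\<lambda>_. 0) x) = cmod 0 * q (\<lambda>_. 0)"
      using bspec[OF spec[OF shom, of 0] zero_Oexp[of G]] .
    then show ?thesis by simp
  qed
  have fin: "finite {x \<in> carrier G. q (point_ind x) \<noteq> 0}"
  proof (rule ccontr)
    assume inf: "infinite {x \<in> carrier G. q (point_ind x) \<noteq> 0}"
    have o1: "openin euclideanreal {..<(1::real)}" by simp
    have cm: "\<forall>U. openin euclideanreal U \<longrightarrow> openin (subtopology (Oexp_top G) (Oexp G)) {u \<in> topspace (subtopology (Oexp_top G) (Oexp G)). q u \<in> U}"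
      using assms(4) unfolding continuous_map_def by (rule conjunct2)
    have "openin (subtopology (Oexp_top G) (Oexp G)) {u \<in> topspace (subtopology (Oexp_top G) (Oexp G)). q u \<in> {..<1}}"
      using spec[OF cm, THEN mp, OF o1] .
    then have "\<exists>T. openin (Oexp_top G) T \<and> {u \<in> topspace (subtopology (Oexp_top G) (Oexp G)). q u \<in> {..<1}} = T \<inter> Oexp G"
      by (simp only: openin_subtopology)
    then obtain S where S: "openin (Oexp_top G) S"
      "{u \<in> topspace (subtopology (Oexp_top G) (Oexp G)). q u \<in> {..<1}} = S \<inter> Oexp G"
      by (elim exE conjE)
    have tsp: "topspace (subtopology (Oexp_top G) (Oexp G)) = Oexp G"
      using topspace_Oexp_top[of G] by (simp only: topspace_subtopology Int_absorb1)
    have S2: "S \<inter> Oexp G = {u \<in> Oexp G. q u < 1}" using S(2) unfolding tsp lessThan_iff by (rule sym)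
    define f :: "'a \<Rightarrow> real" where "f = (\<lambda>_. 1)"
    have sf: "semicharacter G f" unfolding f_def by (rule semichar_const1)
    have cl: "closedin pointwise_top ((span_box G f - S \<inter> span_box G f) \<inter> box_set G f 1)"
    proof -
      have "\<forall>lam\<ge>0. closedin pointwise_top ((span_box G f - S \<inter> span_box G f) \<inter> box_set G f lam)"
        using open_step_open[OF S(1) sf] unfolding step_open_def by (rule conjunct2)
      then show ?thesis by simp
    qed
    define C where "C = (span_box G f - S \<inter> span_box G f) \<inter> box_set G f 1"
    have "openin pointwise_top (topspace pointwise_top - C)"
      using cl unfolding C_def closedin_def by (rule conjunct2)
    then have oC: "openin (product_topology (\<lambda>_. euclidean) UNIV) (UNIV - C)"
      unfolding pointwise_top_def by simp
    have z0: "(\<lambda>_. 0) \<in> S \<inter> Oexp G" unfolding S2 using zero_Oexp[of G] q0 by simp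
    have z: "(\<lambda>_. 0) \<in> UNIV - C"
      using z0 unfolding C_def by blast
    have "\<exists>U. finite {i \<in> UNIV. U i \<noteq> topspace (euclidean::complex topology)} \<and>
                 (\<forall>i \<in> UNIV. openin euclidean (U i)) \<and> (\<lambda>_. 0) \<in> Pi\<^sub>E UNIV U \<and> Pi\<^sub>E UNIV U \<subseteq> UNIV - C"
      using oC z unfolding openin_product_topology_alt by (rule bspec)
    then obtain U where U: "finite {i \<in> UNIV. U i \<noteq> topspace (euclidean::complex topology)}"
      "(\<lambda>_. 0) \<in> Pi\<^sub>E UNIV U" "Pi\<^sub>E UNIV U \<subseteq> UNIV - C"
      by (elim exE conjE)
    have "infinite ({x \<in> carrier G. q (point_ind x) \<noteq> 0} - {i \<in> UNIV. U i \<noteq> topspace (euclidean::complex topology)})"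
      using inf U(1) by (rule Diff_infinite_finite[rotated])
    then obtain x where "x \<in> {x \<in> carrier G. q (point_ind x) \<noteq> 0} - {i \<in> UNIV. U i \<noteq> topspace (euclidean::complex topology)}"
      using infinite_imp_nonempty by blast
    then have x: "x \<in> carrier G" "q (point_ind x) \<noteq> 0" "U x = UNIV" by auto
    have "point_ind x \<in> Pi\<^sub>E UNIV U"
      using U(2) x(3) by (auto simp: point_ind_def PiE_iff)
    then have nC: "point_ind x \<notin> C" using U(3) by blast
    have pO: "point_ind x \<in> Oexp G" using point_ind_Oexp[OF x(1)] .
    have pbox: "point_ind x \<in> box_set G f 1"
      unfolding box_set_def fun_on_def f_def point_ind_def using x by auto
    then have psp: "point_ind x \<in> span_box G f" using box_sub_span[of 1 G f] by auto
    have "point_ind x \<notin> S"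
    proof
      assume "point_ind x \<in> S"
      then have "point_ind x \<in> S \<inter> Oexp G" using pO by blast
      then have "q (point_ind x) < 1" unfolding S2 by blast
      then show False using pb[OF x(1,2)] by linarith
    qed
    then have "point_ind x \<in> C" unfolding C_def using pbox psp by auto
    then show False using nC by blast
  qed
  show ?thesis using fin pb by blast
qed

end
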